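(* Let $\theta\in\mathbb{R}^n$ be a vector with each entry $\theta_i\in\{0,1\}$, $i=1,\dots,n$. Let $\Theta=\mathrm{Diag}(\theta)$ and $\Sigma=I_n-\Theta$. Then for any matrix $H\in\mathbb{R}^{m\times n}$, \[ I_n-[\Theta\ H^T]\left(\begin{bmatrix}\Theta\\ H\end{bmatrix}[\Theta\ H^T]\right)^{\dagger}\begin{bmatrix}\Theta\\ H\end{bmatrix}=\Sigma-\Sigma H^T(H\Sigma H^T)^{\dagger}H\Sigma . \]
   Context: $\mathrm{Diag}(y)$ is the diagonal matrix with diagonal $y$; $I_n$ is the $n\times n$ identity; $N^\dagger$ is the Moore–Penrose pseudo-inverse of $N$. *)

theory Defs
  imports "HOL-Analysis.Analysis"
begin

definition pinv :: "real^'n^'m \<Rightarrow> real^'m^'n" where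
  "pinv A = (THE X. A ** X ** A = A \<and> X ** A ** X = X \<and>
                    transpose (A ** X) = A ** X \<and> transpose (X ** A) = X ** A)"

definition Diag :: "real^'n \<Rightarrow> real^'n^'n" where
  "Diag y = (\<chi> i j. if i = j then y $ i else 0)"

definition vstack :: "real^'n^'p \<Rightarrow> real^'n^'q \<Rightarrow> real^'n^('p + 'q)" where
  "vstack A B = (\<chi> i. case i of Inl j \<Rightarrow> A $ j | Inr k \<Rightarrow> B $ k)"

definition hstack :: "real^'p^'m \<Rightarrow> real^'q^'m \<Rightarrow> real^('p + 'q)^'m" where
  "hstack A B = (\<chi> i j. case j of Inl k \<Rightarrow> A $ i $ k | Inr l \<Rightarrow> B $ i $ l)"

end

theory Submission
  imports Defs
begin

lemma msub_ldistrib: "(A::'a::ring_1^'n^'m) ** (B - C) = A ** B - A ** C"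
  by (simp add: matrix_matrix_mult_def vec_eq_iff sum_subtractf right_diff_distrib)
lemma msub_rdistrib: "((B::'a::ring_1^'n^'m) - C) ** A = B ** A - C ** A"
  by (simp add: matrix_matrix_mult_def vec_eq_iff sum_subtractf left_diff_distrib)
lemma madd_rdistrib: "((B::'a::ring_1^'n^'m) + C) ** A = B ** A + C ** A"
  by (simp add: matrix_matrix_mult_def vec_eq_iff sum.distrib distrib_right)
lemma mmul_rzero[simp]: "(A::'a::ring_1^'n^'m) ** (0::'a^'k^'n) = 0"
  by (simp add: matrix_matrix_mult_def vec_eq_iff)
lemma mmul_lzero[simp]: "(0::'a::ring_1^'n^'m) ** (A::'a^'k^'n) = 0"
  by (simp add: matrix_matrix_mult_def vec_eq_iff)
lemma transpose_diff: "transpose ((A::'a::ring_1^'n^'m) - B) = transpose A - transpose B"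
  by (simp add: transpose_def vec_eq_iff)
lemma transpose_add: "transpose ((A::'a::ring_1^'n^'m) + B) = transpose A + transpose B"
  by (simp add: transpose_def vec_eq_iff)
lemma transpose_zero[simp]: "transpose (0::'a::ring_1^'n^'m) = 0"
  by (simp add: transpose_def vec_eq_iff)

lemma MtM_zero:
  fixes M :: "real^'n^'m"
  assumes "transpose M ** M = 0"
  shows "M = 0"
proof -
  have "M $ i $ j = 0" for i j
  proof -
    have "(transpose M ** M) $ j $ j = 0" using assms by simp
    hence "(\<Sum>k\<in>UNIV. M $ k $ j * M $ k $ j) = 0"
      by (simp add: matrix_matrix_mult_def transpose_def)
    hence "\<forall>k\<in>UNIV. M $ k $ j * M $ k $ j = 0"
      by (subst (asm) sum_nonneg_eq_0_iff) auto
    thus ?thesis by simp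
  qed
  thus ?thesis by (simp add: vec_eq_iff)
qed



lemma inner_transpose: "inner x (y v* (B::real^'n^'m)) = inner (B *v x) y"
  apply (simp add: inner_vec_def matrix_vector_mult_def vector_matrix_mult_def sum_distrib_left sum_distrib_right)
  apply (subst sum.swap)
  apply (simp add: mult_ac)
  done

lemma pinv_unique:
  fixes A :: "real^'n^'m"
  assumes x1: "A ** X ** A = A" and x2: "X ** A ** X = X" and x3: "transpose (A ** X) = A ** X"
    and x4: "transpose (X ** A) = X ** A"
  and y1: "A ** Y ** A = A" and y2: "Y ** A ** Y = Y" and y3: "transpose (A ** Y) = A ** Y"
    and y4: "transpose (Y ** A) = Y ** A"
  shows "X = Y"
proof -
  have "X = X ** transpose (A ** X)" using x2 x3 by (simp add: matrix_mul_assoc)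
  also have "\<dots> = X ** transpose X ** transpose A" by (simp add: matrix_transpose_mul matrix_mul_assoc)
  also have "\<dots> = X ** transpose X ** transpose (A ** Y ** A)" using y1 by simp
  also have "\<dots> = X ** transpose (A ** X) ** transpose (A ** Y)" by (simp add: matrix_transpose_mul matrix_mul_assoc)
  also have "\<dots> = X ** (A ** X ** A) ** Y" using x3 y3 by (simp add: matrix_mul_assoc)
  also have "\<dots> = X ** A ** Y" using x1 by simp
  finally have hx: "X = X ** A ** Y" .
  have "Y = transpose (Y ** A) ** Y" using y2 y4 by (simp add: matrix_mul_assoc)
  also have "\<dots> = transpose A ** transpose Y ** Y" by (simp add: matrix_transpose_mul matrix_mul_assoc)
  also have "\<dots> = transpose (A ** X ** A) ** transpose Y ** Y" using x1 by simp
  also have "\<dots> = transpose (X ** A) ** transpose (Y ** A) ** Y" by (simp add: matrix_transpose_mul matrix_mul_assoc)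
  also have "\<dots> = X ** A ** (Y ** A ** Y)" using x4 y4 by (simp add: matrix_mul_assoc)
  also have "\<dots> = X ** A ** Y" using y2 by simp
  finally show ?thesis using hx by simp
qed

lemma normal_col:
  fixes B :: "real^'n^'m"
  shows "\<exists>c. (transpose B ** B) *v c = transpose B *v y"
proof -
  let ?M = "transpose B ** B"
  let ?S = "range (\<lambda>c. ?M *v c)"
  have sub: "subspace ?S" by (metis linear_subspace_image subspace_UNIV matrix_vector_mul_linear)
  obtain s z where s: "s \<in> span ?S" and z: "\<And>w. w \<in> span ?S \<Longrightarrow> orthogonal z w"
      and v: "transpose B *v y = s + z"
    using orthogonal_subspace_decomp_exists by blast
  have sS: "s \<in> ?S" using s sub by (metis span_eq_iff)
  have "orthogonal z (?M *v z)" using z by (simp add: span_base)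
  hence "inner (B *v z) (B *v z) = 0"
    by (simp add: orthogonal_def inner_transpose matrix_vector_mul_assoc[symmetric])
  hence Bz: "B *v z = 0" by simp
  have "inner z z = inner z (transpose B *v y) - inner z s" using v by (simp add: inner_add_right)
  also have "inner z s = 0" using z s by (simp add: orthogonal_def)
  also have "inner z (transpose B *v y) = 0" by (simp add: inner_transpose Bz)
  finally have "z = 0" by simp
  thus ?thesis using sS v by auto
qed


lemma normal_exists:
  fixes B :: "real^'n^'m"
  shows "\<exists>C. (transpose B ** B) ** C = transpose B"
proof -
  let ?M = "transpose B ** B"
  have "\<forall>j. \<exists>c. ?M *v c = transpose B *v axis j 1" using normal_col by blast
  then obtain c where c: "\<And>j. ?M *v c j = transpose B *v axis j 1" by metis
  let ?C = "\<chi> i j. c j $ i"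
  have "(?M ** ?C) $ i $ j = transpose B $ i $ j" for i j
  proof -
    have "(?M ** ?C) $ i $ j = (?M *v c j) $ i"
      by (simp add: matrix_matrix_mult_def matrix_vector_mult_def)
    also have "\<dots> = (transpose B *v axis j 1) $ i" using c by simp
    also have "\<dots> = transpose B $ i $ j"
      unfolding matrix_vector_mult_def by (simp add: axis_def if_distrib cong: if_cong)
    finally show ?thesis .
  qed
  thus ?thesis by (auto simp: vec_eq_iff)
qed

lemma sym_from: "transpose (S::real^'n^'n) = transpose S ** S \<Longrightarrow> transpose S = S"
  by (metis matrix_transpose_mul transpose_transpose)

lemma pinv_exists:
  fixes A :: "real^'n^'m"
  shows "\<exists>X. A ** X ** A = A \<and> X ** A ** X = X \<and>
                    transpose (A ** X) = A ** X \<and> transpose (X ** A) = X ** A"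
proof -
  obtain C where C: "(transpose A ** A) ** C = transpose A" using normal_exists by blast
  obtain C' where C': "(transpose (transpose A) ** transpose A) ** C' = transpose (transpose A)"
    using normal_exists by blast
  define E where "E = transpose C'"
  have E: "E ** A ** transpose A = transpose A"
  proof -
    have "transpose ((A ** transpose A) ** C') = transpose A" using C' by simp
    thus ?thesis unfolding E_def by (simp add: matrix_transpose_mul matrix_mul_assoc)
  qed
  have Ct: "transpose C ** transpose A ** A = A"
  proof -
    have "transpose ((transpose A ** A) ** C) = A" using C by simp
    thus ?thesis by (simp add: matrix_transpose_mul matrix_mul_assoc)
  qed
  have ACsym: "transpose (A ** C) = A ** C"
  proof (rule sym_from)
    have "transpose (A ** C) ** (A ** C) = transpose C ** (transpose A ** A ** C)"
      by (simp add: matrix_transpose_mul matrix_mul_assoc)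
    also have "\<dots> = transpose (A ** C)" using C by (simp add: matrix_transpose_mul)
    finally show "transpose (A ** C) = transpose (A ** C) ** (A ** C)" by simp
  qed
  have ACA: "A ** C ** A = A"
  proof -
    have "A ** C ** A = transpose (A ** C) ** A" using ACsym by simp
    also have "\<dots> = transpose C ** transpose A ** A" by (simp add: matrix_transpose_mul)
    finally show ?thesis using Ct by simp
  qed
  have EAsym: "transpose (E ** A) = E ** A"
  proof -
    have "(E ** A) ** transpose (E ** A) = (E ** A ** transpose A) ** transpose E"
      by (simp add: matrix_transpose_mul matrix_mul_assoc)
    also have "\<dots> = transpose (E ** A)" using E by (simp add: matrix_transpose_mul)
    finally have h: "E ** A ** transpose (E ** A) = transpose (E ** A)" .
    have "transpose (E ** A ** transpose (E ** A)) = E ** A ** transpose (E ** A)"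
      by (simp only: matrix_transpose_mul transpose_transpose matrix_mul_assoc)
    hence "transpose (transpose (E ** A)) = transpose (E ** A)" by (simp only: h)
    thus ?thesis by simp
  qed
  have AEA: "A ** E ** A = A"
  proof -
    have "A ** E ** A = A ** transpose (E ** A)" using EAsym by (simp add: matrix_mul_assoc)
    also have "\<dots> = transpose (E ** A ** transpose A)" by (simp add: matrix_transpose_mul matrix_mul_assoc)
    also have "\<dots> = A" using E by simp
    finally show ?thesis .
  qed
  define D where "D = E ** A ** C"
  have ED: "E ** A ** C ** A = E ** A"
  proof -
    have "E ** A ** C ** A = E ** (A ** C ** A)" by (simp only: matrix_mul_assoc)
    thus ?thesis using ACA by simp
  qed
  have AD: "A ** E ** A ** C = A ** C" using AEA by simp
  have 1: "A ** D ** A = A"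
  proof -
    have "A ** D ** A = A ** E ** A ** C ** A" unfolding D_def by (simp only: matrix_mul_assoc)
    thus ?thesis using AEA ACA by simp
  qed
  have 2: "D ** A ** D = D"
  proof -
    have "D ** A ** D = (E ** A ** C ** A) ** E ** A ** C" unfolding D_def by (simp only: matrix_mul_assoc)
    also have "\<dots> = E ** (A ** E ** A) ** C" using ED by (simp only: matrix_mul_assoc)
    finally show ?thesis using AEA D_def by simp
  qed
  have 3: "transpose (A ** D) = A ** D"
  proof -
    have "A ** D = A ** E ** A ** C" unfolding D_def by (simp only: matrix_mul_assoc)
    thus ?thesis using AD ACsym by simp
  qed
  have 4: "transpose (D ** A) = D ** A"
    unfolding D_def using ED EAsym by simp
  show ?thesis using 1 2 3 4 by blast
qed

lemma pinv_props:
  fixes A :: "real^'n^'m"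
  shows "A ** pinv A ** A = A \<and> pinv A ** A ** pinv A = pinv A \<and>
                    transpose (A ** pinv A) = A ** pinv A \<and> transpose (pinv A ** A) = pinv A ** A"
proof -
  obtain X where X: "A ** X ** A = A \<and> X ** A ** X = X \<and>
                    transpose (A ** X) = A ** X \<and> transpose (X ** A) = X ** A"
    using pinv_exists by blast
  show ?thesis unfolding pinv_def
    apply (rule theI[of _ X])
     apply (rule X)
    using X pinv_unique by blast
qed


lemma sum_UNIV_plus:
  fixes f :: "('p::finite + 'q::finite) \<Rightarrow> 'a::comm_monoid_add"
  shows "sum f UNIV = (\<Sum>j\<in>UNIV. f (Inl j)) + (\<Sum>k\<in>UNIV. f (Inr k))"
proof -
  have U: "(UNIV::('p+'q) set) = range Inl \<union> range Inr" by (metis UNIV_Plus_UNIV Plus_def)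
  have "sum f UNIV = sum f (range Inl) + sum f (range Inr)"
    unfolding U by (rule sum.union_disjoint) auto
  also have "\<dots> = (\<Sum>j\<in>UNIV. f (Inl j)) + (\<Sum>k\<in>UNIV. f (Inr k))"
    by (simp add: sum.reindex)
  finally show ?thesis .
qed

lemma hstack_transpose: "hstack (transpose P) (transpose Q) = transpose (vstack P Q)"
  by (simp add: hstack_def vstack_def transpose_def vec_eq_iff split: sum.split)

lemma vstack_mult: "vstack P Q ** M = vstack (P ** M) (Q ** M)"
  by (simp add: vstack_def matrix_matrix_mult_def vec_eq_iff split: sum.split)

lemma vstack_add: "vstack P Q + vstack P' Q' = vstack (P + P') (Q + Q')"
  by (simp add: vstack_def vec_eq_iff split: sum.split)

lemma hstack_vstack: "hstack X Y ** vstack U V = X ** U + Y ** V"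
  by (simp add: vstack_def hstack_def matrix_matrix_mult_def vec_eq_iff sum_UNIV_plus)

lemma L1:
  fixes A :: "real^'n^'k" and X :: "real^'k^'k"
  assumes "(A ** transpose A) ** X ** (A ** transpose A) = A ** transpose A"
  shows "(A ** transpose A) ** X ** A = A"
proof -
  let ?G = "A ** transpose A"
  define E where "E = (?G ** X - mat 1) ** A"
  have h0: "(?G ** X - mat 1) ** ?G = 0" using assms by (simp add: msub_rdistrib)
  have h1: "E ** transpose E = ((?G ** X - mat 1) ** ?G) ** transpose (?G ** X - mat 1)"
    unfolding E_def by (simp add: matrix_transpose_mul matrix_mul_assoc)
  have h2: "E ** transpose E = 0" unfolding h1 h0 by (rule mmul_lzero)
  have "transpose E = 0" by (rule MtM_zero) (simp only: transpose_transpose h2)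
  hence "E = 0" by (metis transpose_transpose transpose_zero)
  thus ?thesis unfolding E_def by (simp add: msub_rdistrib)
qed

lemma L2:
  fixes A :: "real^'n^'k"
  assumes "A ** P1 = A" "A ** P2 = A" "P1 = transpose A ** Z1" "P2 = transpose A ** Z2"
  shows "P1 = P2"
proof -
  define D where "D = P1 - P2"
  have AD: "A ** D = 0" using assms by (simp add: D_def msub_ldistrib)
  have "D = transpose A ** (Z1 - Z2)" using assms by (simp add: D_def msub_ldistrib)
  hence tD: "transpose D = transpose (Z1 - Z2) ** A" by (simp add: matrix_transpose_mul)
  have "transpose D ** D = transpose (Z1 - Z2) ** (A ** D)" unfolding tD by (simp add: matrix_mul_assoc)
  hence "D = 0" using AD MtM_zero by simp
  thus ?thesis by (simp add: D_def)
qed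


lemma Diag_facts:
  fixes \<theta> :: "real^'n"
  assumes "\<forall>i. \<theta> $ i = 0 \<or> \<theta> $ i = 1"
  shows "transpose (Diag \<theta>) = Diag \<theta>" "Diag \<theta> ** Diag \<theta> = Diag \<theta>"
proof -
  show "transpose (Diag \<theta>) = Diag \<theta>" by (simp add: Diag_def transpose_def vec_eq_iff)
  have "(Diag \<theta> ** Diag \<theta>) $ i $ j = Diag \<theta> $ i $ j" for i j
  proof -
    have "(Diag \<theta> ** Diag \<theta>) $ i $ j = (\<Sum>k\<in>UNIV. (if i = k then \<theta> $ i else 0) * (if k = j then \<theta> $ k else 0))"
      by (simp add: Diag_def matrix_matrix_mult_def)
    also have "\<dots> = (\<Sum>k\<in>UNIV. if k = i then \<theta> $ i * (if i = j then \<theta> $ i else 0) else 0)"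
      by (rule sum.cong) auto
    also have "\<dots> = (if i = j then \<theta> $ i * \<theta> $ i else 0)" by simp
    also have "\<dots> = Diag \<theta> $ i $ j" using assms[rule_format, of i] by (auto simp: Diag_def)
    finally show ?thesis .
  qed
  thus "Diag \<theta> ** Diag \<theta> = Diag \<theta>" by (simp add: vec_eq_iff)
qed

theorem proposition2p5:
  fixes \<theta> :: "real^'n" and H :: "real^'n^'m"
  assumes "\<forall>i. \<theta> $ i = 0 \<or> \<theta> $ i = 1"
  shows "mat 1 - hstack (Diag \<theta>) (transpose H)
            ** pinv (vstack (Diag \<theta>) H ** hstack (Diag \<theta>) (transpose H))
            ** vstack (Diag \<theta>) H
         = (mat 1 - Diag \<theta>) - (mat 1 - Diag \<theta>) ** transpose H
            ** pinv (H ** (mat 1 - Diag \<theta>) ** transpose H) ** H ** (mat 1 - Diag \<theta>)"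
proof -
  define T where "T = Diag \<theta>"
  define S where "S = mat 1 - T"
  have tT: "transpose T = T" and TT: "T ** T = T" using Diag_facts[OF assms] by (auto simp: T_def)
  have tS: "transpose S = S" using tT by (simp add: S_def transpose_diff)
  have SS: "S ** S = S" using TT by (simp add: S_def msub_ldistrib msub_rdistrib)
  have TS: "T ** S = 0" using TT by (simp add: S_def msub_ldistrib)
  define A where "A = vstack T H"
  have hA: "hstack T (transpose H) = transpose A"
    using hstack_transpose[of T H] tT by (simp add: A_def)
  define X where "X = pinv (A ** transpose A)"
  define P where "P = transpose A ** X ** A"
  have AP: "A ** P = A"
  proof -
    have "(A ** transpose A) ** X ** (A ** transpose A) = A ** transpose A"
      using pinv_props unfolding X_def by blast
    hence "(A ** transpose A) ** X ** A = A" by (rule L1)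
    thus ?thesis unfolding P_def by (simp add: matrix_mul_assoc)
  qed
  define Y where "Y = pinv (H ** S ** transpose H)"
  define B where "B = H ** S"
  have "B ** transpose B = H ** (S ** S) ** transpose H"
    unfolding B_def using tS by (simp add: matrix_transpose_mul matrix_mul_assoc)
  hence BB: "B ** transpose B = H ** S ** transpose H" using SS by simp
  have HSY: "H ** S ** transpose H ** Y ** H ** S = H ** S"
  proof -
    have "(B ** transpose B) ** Y ** (B ** transpose B) = B ** transpose B"
      using pinv_props unfolding Y_def BB by blast
    hence "(B ** transpose B) ** Y ** B = B" by (rule L1)
    thus ?thesis unfolding BB by (simp add: B_def matrix_mul_assoc)
  qed
  define Q where "Q = S ** transpose H ** Y ** H ** S"
  define P' where "P' = T + Q"
  have TQ: "T ** Q = 0" unfolding Q_def using TS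
    by (simp add: matrix_mul_assoc)
  have HQ: "H ** Q = H ** S"
    unfolding Q_def using HSY by (simp add: matrix_mul_assoc)
  have AP': "A ** P' = A"
    unfolding A_def P'_def using TT TQ HQ
    by (simp add: vstack_mult matrix_add_ldistrib S_def msub_ldistrib vstack_add)
  define Z1 where "Z1 = T - transpose H ** Y ** H ** S"
  define Z2 where "Z2 = Y ** H ** S"
  have P'Z: "P' = transpose A ** vstack Z1 Z2"
  proof -
    have "transpose A ** vstack Z1 Z2 = T ** Z1 + transpose H ** Z2"
      unfolding hA[symmetric] by (rule hstack_vstack)
    also have "\<dots> = T + (transpose H ** Y ** H ** S - T ** (transpose H ** Y ** H ** S))"
      unfolding Z1_def Z2_def using TT by (simp add: msub_ldistrib matrix_mul_assoc)
    also have "\<dots> = P'"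
      unfolding P'_def Q_def S_def by (simp add: msub_rdistrib matrix_mul_assoc)
    finally show ?thesis by simp
  qed
  have "P = P'"
    by (rule L2[OF AP AP' _ P'Z, of "X ** A"]) (simp add: P_def matrix_mul_assoc)
  hence "mat 1 - P = S - Q" by (simp add: P'_def S_def)
  thus ?thesis using hA
    unfolding P_def X_def A_def Q_def Y_def S_def T_def by simp
qed

end
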